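(* Let $M$ be an entrywise nonnegative $m\times n$ real matrix and $r$ a positive integer. Then $\mathrm{rank}^+(M)\le r$ if and only if there exist integers $0\le s,t\le r$, sets $U\subseteq[m]$ with $|U|=s$ and $V\subseteq[n]$ with $|V|=t$, positive integers $p\le\binom rs$ and $q\le\binom rt$, and real matrices $B_1,\dots,B_p$ (each $r\times s$) and $C_1,\dots,C_q$ (each $t\times r$) for which the test $\mathbb P$ outputs PASS.
   Context: $\mathrm{rank}^+(M)$ is the smallest $r$ with $M=AW$, $A\in\mathbb{R}_{\ge0}^{m\times r}$, $W\in\mathbb{R}_{\ge0}^{r\times n}$. Notation: $M_i$ is the $i$-th column, $M^j$ the $j$-th row, $M_i^U\in\mathbb{R}^s$ the entries of column $i$ in rows $U$, $M^j_V\in\mathbb{R}^{1\times t}$ the entries of row $j$ in columns $V$. Support of a vector = set of indices of nonzero entries. Lexicographic ordering on subsets of $[r]$: if $|S|<|T|$ then $S$ precedes $T$; equal-size subsets compared by standard lexicographic order. For a finite collection $\mathcal S$ of vectors, $\mathrm{first}(\mathcal S)$ is the vector with lexicographically minimal support among all entrywise nonnegative vectors in $\mathcal S$; it is FAIL if $\mathcal S$ contains no nonnegative vector or if two or more distinct nonnegative vectors tie for the lexicographically earliest support. The test $\mathbb P$: for each $i\in[n]$ set $W_i=\mathrm{first}(\{B_1M_i^U,\dots,B_pM_i^U\})$ and for each $j\in[m]$ set $A^j=\mathrm{first}(\{M^j_VC_1,\dots,M^j_VC_q\})$; $\mathbb P$ outputs PASS iff none of these is FAIL and $A^jW_i=M^j_i$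 for all $i,j$ (otherwise it outputs FAIL). *)

theory Defs
  imports Complex_Main
begin

text \<open>Matrices are functions nat => nat => real; an m x n matrix uses indices
  i < m (rows) and j < n (columns); [k] is rendered as {0..<k}.
  Vectors in R^r are functions nat => real with indices k < r.\<close>

definition nonneg_mat :: "nat \<Rightarrow> nat \<Rightarrow> (nat \<Rightarrow> nat \<Rightarrow> real) \<Rightarrow> bool" where
  "nonneg_mat m n M \<longleftrightarrow> (\<forall>i<m. \<forall>j<n. M i j \<ge> 0)"

definition nonneg_factorization ::
  "nat \<Rightarrow> nat \<Rightarrow> (nat \<Rightarrow> nat \<Rightarrow> real) \<Rightarrow> nat \<Rightarrow> bool" where
  "nonneg_factorization m n M r \<longleftrightarrow>
     (\<exists>A W. nonneg_mat m r A \<and> nonneg_mat r n W \<and>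
        (\<forall>i<m. \<forall>j<n. M i j = (\<Sum>k<r. A i k * W k j)))"

definition nonneg_rank :: "nat \<Rightarrow> nat \<Rightarrow> (nat \<Rightarrow> nat \<Rightarrow> real) \<Rightarrow> nat" where
  "nonneg_rank m n M = (LEAST r. nonneg_factorization m n M r)"

definition nonneg_vec :: "nat \<Rightarrow> (nat \<Rightarrow> real) \<Rightarrow> bool" where
  "nonneg_vec r v \<longleftrightarrow> (\<forall>k<r. v k \<ge> 0)"

definition supp :: "nat \<Rightarrow> (nat \<Rightarrow> real) \<Rightarrow> nat set" where
  "supp r v = {k. k < r \<and> v k \<noteq> 0}"

definition lex_less :: "nat set \<Rightarrow> nat set \<Rightarrow> bool" where
  "lex_less S T \<longleftrightarrow> card S < card T \<or>
     (card S = card T \<and>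
      (sorted_list_of_set S, sorted_list_of_set T) \<in> lexord {(a, b). a < b})"

definition first_ok :: "nat \<Rightarrow> nat \<Rightarrow> (nat \<Rightarrow> nat \<Rightarrow> real) \<Rightarrow> nat \<Rightarrow> bool" where
  "first_ok r p vs l \<longleftrightarrow> l < p \<and> nonneg_vec r (vs l) \<and>
     (\<forall>l'<p. nonneg_vec r (vs l') \<longrightarrow>
        \<not> lex_less (supp r (vs l')) (supp r (vs l)) \<and>
        (supp r (vs l') = supp r (vs l) \<longrightarrow> (\<forall>k<r. vs l' k = vs l k)))"

text \<open>first: None encodes FAIL.\<close>
definition first :: "nat \<Rightarrow> nat \<Rightarrow> (nat \<Rightarrow> nat \<Rightarrow> real) \<Rightarrow> (nat \<Rightarrow> real) option" where
  "first r p vs =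
     (if \<exists>l. first_ok r p vs l
      then Some (\<lambda>k. if k < r then vs (SOME l. first_ok r p vs l) k else 0)
      else None)"

definition elem :: "nat set \<Rightarrow> nat \<Rightarrow> nat" where
  "elem U a = sorted_list_of_set U ! a"

text \<open>B M_i^U for an r x s matrix B, where s = card U.\<close>
definition colvec :: "nat \<Rightarrow> (nat \<Rightarrow> nat \<Rightarrow> real) \<Rightarrow> nat set \<Rightarrow>
    (nat \<Rightarrow> nat \<Rightarrow> real) \<Rightarrow> nat \<Rightarrow> nat \<Rightarrow> real" where
  "colvec r M U B i = (\<lambda>k. \<Sum>a<card U. B k a * M (elem U a) i)"

text \<open>M^j_V C for a t x r matrix C, where t = card V.\<close>
definition rowvec :: "nat \<Rightarrow> (nat \<Rightarrow> nat \<Rightarrow> real) \<Rightarrow> nat set \<Rightarrow>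
    (nat \<Rightarrow> nat \<Rightarrow> real) \<Rightarrow> nat \<Rightarrow> nat \<Rightarrow> real" where
  "rowvec r M V C j = (\<lambda>k. \<Sum>b<card V. M j (elem V b) * C b k)"

text \<open>The test P: Bs l is B_{l+1} (l < p), Cs l is C_{l+1} (l < q).\<close>
definition test_P :: "nat \<Rightarrow> nat \<Rightarrow> nat \<Rightarrow> (nat \<Rightarrow> nat \<Rightarrow> real) \<Rightarrow> nat set \<Rightarrow> nat set \<Rightarrow>
    nat \<Rightarrow> nat \<Rightarrow> (nat \<Rightarrow> nat \<Rightarrow> nat \<Rightarrow> real) \<Rightarrow> (nat \<Rightarrow> nat \<Rightarrow> nat \<Rightarrow> real) \<Rightarrow> bool" where
  "test_P m n r M U V p q Bs Cs \<longleftrightarrow>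
     (let W = (\<lambda>i. first r p (\<lambda>l. colvec r M U (Bs l) i));
          A = (\<lambda>j. first r q (\<lambda>l. rowvec r M V (Cs l) j))
      in (\<forall>i<n. W i \<noteq> None) \<and> (\<forall>j<m. A j \<noteq> None) \<and>
         (\<forall>i<n. \<forall>j<m. (\<Sum>k<r. the (A j) k * the (W i) k) = M j i))"

end

theory Submission imports Defs "HOL-Library.Function_Algebras" begin

interpretation fv: vector_space "\<lambda>(c::real) (f::nat\<Rightarrow>real). (\<lambda>x. c * f x)"
  by unfold_locales (auto simp: fun_eq_iff algebra_simps)

lemma sum_fun_app: "(sum f S :: nat \<Rightarrow> real) x = (\<Sum>k\<in>S. f k x)"
  by (induction S rule: infinite_finite_induct) auto

definition lc :: "(nat \<Rightarrow> real) \<Rightarrow> (nat \<Rightarrow> nat \<Rightarrow> real) \<Rightarrow> nat set \<Rightarrow> nat \<Rightarrow> real" where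
  "lc c f S = (\<lambda>x. \<Sum>k\<in>S. c k * f k x)"

definition li :: "(nat \<Rightarrow> nat \<Rightarrow> real) \<Rightarrow> nat set \<Rightarrow> bool" where
  "li f S \<longleftrightarrow> (\<forall>c. lc c f S = 0 \<longrightarrow> (\<forall>k\<in>S. c k = 0))"

lemma lc_sum: "lc c f S = (\<Sum>k\<in>S. (\<lambda>x. c k * f k x))"
  by (simp add: lc_def fun_eq_iff sum_fun_app)

lemma lc_span: "lc c f S \<in> fv.span (f ` S)"
  unfolding lc_sum by (intro fv.span_sum fv.span_scale fv.span_base) auto

lemma li_inj: assumes "li f S" "finite S" shows "inj_on f S"
proof (rule inj_onI, rule ccontr)
  fix a b assume ab: "a \<in> S" "b \<in> S" "f a = f b" "a \<noteq> b"
  define c where "c = (\<lambda>k. if k = a then (1::real) else if k = b then -1 else 0)"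
  have "lc c f S = (\<lambda>x. \<Sum>k\<in>{a,b}. c k * f k x)"
    unfolding lc_def using assms(2) ab by (intro ext sum.mono_neutral_right) (auto simp: c_def)
  also have "\<dots> = 0" using ab by (simp add: c_def fun_eq_iff)
  finally have "c a = 0" using assms(1) ab unfolding li_def by blast
  thus False by (simp add: c_def)
qed

lemma li_indep: assumes "li f S" "finite S" shows "fv.independent (f ` S)"
proof
  assume "fv.dependent (f ` S)"
  then obtain u where u: "\<exists>v\<in>f ` S. u v \<noteq> 0" "(\<Sum>v\<in>f ` S. (\<lambda>x. u v * v x)) = 0"
    using fv.dependent_finite assms(2) by auto
  have inj: "inj_on f S" using li_inj assms by blast
  have "lc (u \<circ> f) f S = 0"
    using u(2) unfolding lc_sum sum.reindex[OF inj] by (simp add: o_def)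
  then have "\<forall>k\<in>S. u (f k) = 0" using assms(1) unfolding li_def by auto
  thus False using u(1) by auto
qed

lemma li_card_bound:
  assumes "li f S" "finite S" "finite G" "\<And>k. k \<in> S \<Longrightarrow> \<exists>c. f k = lc c g G"
  shows "card S \<le> card G"
proof -
  have "f ` S \<subseteq> fv.span (g ` G)" using assms(4) lc_span by (metis image_subsetI)
  then have "card (f ` S) \<le> card (g ` G)"
    using fv.independent_span_bound[of "g ` G" "f ` S"] li_indep assms by auto
  also have "\<dots> \<le> card G" by (rule card_image_le[OF assms(3)])
  finally show ?thesis using card_image[OF li_inj[OF assms(1,2)]] by simp
qed

lemma lc_cong: "(\<And>k. k \<in> S \<Longrightarrow> c k = d k) \<Longrightarrow> (\<And>k. k \<in> S \<Longrightarrow> f k = g k) \<Longrightarrow> lc c f S = lc d g S"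
  unfolding lc_def by (intro ext sum.cong) auto

lemma lc_zero_ext:
  assumes "finite I" "T \<subseteq> I" "\<And>k. k \<in> I - T \<Longrightarrow> c k = 0"
  shows "lc c f I = lc c f T"
  unfolding lc_def using assms by (intro ext sum.mono_neutral_right) auto

lemma lc_diff: "lc (\<lambda>k. c k - d k) f S = lc c f S - lc d f S"
  by (simp add: lc_def fun_eq_iff sum_subtractf left_diff_distrib)

lemma lc_insert: "finite S \<Longrightarrow> k \<notin> S \<Longrightarrow> lc c f (insert k S) = (\<lambda>x. c k * f k x + lc c f S x)"
  by (simp add: lc_def)

lemma li_subset:
  assumes "li f S" "T \<subseteq> S" "finite S" shows "li f T"
  unfolding li_def
proof (intro allI impI ballI)
  fix c k assume c: "lc c f T = 0" and k: "k \<in> T"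
  define c' where "c' = (\<lambda>j. if j \<in> T then c j else 0)"
  have "lc c' f S = lc c' f T" using assms by (intro lc_zero_ext) (auto simp: c'_def)
  also have "\<dots> = lc c f T" by (intro lc_cong) (auto simp: c'_def)
  finally have "lc c' f S = 0" using c by simp
  then have "c' k = 0" using assms(1) k assms(2) unfolding li_def by blast
  thus "c k = 0" using k by (simp add: c'_def)
qed

lemma li_unique:
  assumes "li f S" "lc c f S = lc d f S" "k \<in> S" shows "c k = d k"
proof -
  have "lc (\<lambda>k. c k - d k) f S = 0" using assms(2) by (simp add: lc_diff)
  thus ?thesis using assms(1,3) unfolding li_def by fastforce
qed

lemma li_insert:
  assumes "finite S" "li f S" "k \<notin> S" "\<not> (\<exists>c. f k = lc c f S)"
  shows "li f (insert k S)"
  unfolding li_def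
proof (intro allI impI)
  fix c assume c: "lc c f (insert k S) = 0"
  have ck: "c k = 0"
  proof (rule ccontr)
    assume ne: "c k \<noteq> 0"
    have "\<And>x. c k * f k x + lc c f S x = 0" using c lc_insert[OF assms(1,3)] by (metis zero_fun_def)
    then have "f k = lc (\<lambda>j. - c j / c k) f S"
      using ne by (auto simp: lc_def fun_eq_iff sum_divide_distrib[symmetric] sum_negf field_simps)
         (metis add.commute add_eq_0_iff2 mult.commute)
    thus False using assms(4) by blast
  qed
  then have "lc c f S = 0" using c lc_insert[OF assms(1,3)] by (simp add: fun_eq_iff)
  then show "\<forall>j\<in>insert k S. c j = 0" using ck assms(2) unfolding li_def by blast
qed

lemma li_extend:
  assumes "finite I" "T \<subseteq> I" "li f T"
  shows "\<exists>S. T \<subseteq> S \<and> S \<subseteq> I \<and> li f S \<and> (\<forall>k\<in>I. \<exists>c. f k = lc c f S)"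
  using assms
proof (induction "card (I - T)" arbitrary: T rule: less_induct)
  case less
  show ?case
  proof (cases "\<forall>k\<in>I. \<exists>c. f k = lc c f T")
    case True thus ?thesis using less by blast
  next
    case False
    then obtain k where k: "k \<in> I" "\<not> (\<exists>c. f k = lc c f T)" by blast
    have kT: "k \<notin> T"
    proof
      assume "k \<in> T"
      have "(\<Sum>j\<in>T. (if j = k then 1 else 0) * f j x) = f k x" for x
      proof -
        have "(\<Sum>j\<in>T. (if j = k then 1 else 0) * f j x) = (\<Sum>j\<in>T. if j = k then f j x else 0)"
          by (rule sum.cong) auto
        also have "\<dots> = f k x" using \<open>k \<in> T\<close> finite_subset[OF less.prems(2,1)] by (simp add: sum.delta')
        finally show ?thesis .
      qed
      then have "f k = lc (\<lambda>j. if j = k then 1 else 0) f T" by (simp add: lc_def fun_eq_iff)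
      thus False using k by blast
    qed
    have fT: "finite T" using finite_subset less.prems by blast
    have li2: "li f (insert k T)" using li_insert[OF fT less.prems(3) kT k(2)] .
    have "card (I - insert k T) < card (I - T)"
      using k kT less.prems(1) by (intro psubset_card_mono) auto
    then obtain S where "insert k T \<subseteq> S \<and> S \<subseteq> I \<and> li f S \<and> (\<forall>k\<in>I. \<exists>c. f k = lc c f S)"
      using less.hyps[of "insert k T"] less.prems k li2 by auto
    thus ?thesis by blast
  qed
qed

definition ev :: "nat \<Rightarrow> nat \<Rightarrow> real" where "ev a = (\<lambda>x. if x = a then 1 else 0)"

lemma lc_ev: "finite G \<Longrightarrow> (\<And>x. x \<notin> G \<Longrightarrow> v x = 0) \<Longrightarrow> v = lc v ev G"
  by (auto simp: lc_def ev_def fun_eq_iff if_distrib sum.delta cong: if_cong)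

lemma li_spans:
  assumes "li f S" "finite S" "finite G" "card G \<le> card S"
    "\<And>k x. k \<in> S \<Longrightarrow> x \<notin> G \<Longrightarrow> f k x = 0" "\<And>x. x \<notin> G \<Longrightarrow> v x = 0"
  shows "\<exists>c. v = lc c f S"
proof (rule ccontr)
  assume nv: "\<not> (\<exists>c. v = lc c f S)"
  obtain k where k: "k \<notin> S" using assms(2) ex_new_if_finite infinite_UNIV_nat by blast
  define f' where "f' = f(k := v)"
  have e: "lc c f' S = lc c f S" for c using k by (intro lc_cong) (auto simp: f'_def)
  have "li f' S" using assms(1) unfolding li_def e .
  moreover have "\<not> (\<exists>c. f' k = lc c f' S)" using nv e by (simp add: f'_def)
  ultimately have "li f' (insert k S)" using li_insert[OF assms(2) _ k] by blast
  then have "card (insert k S) \<le> card G"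
  proof (rule li_card_bound[where g = ev])
    fix j assume "j \<in> insert k S"
    then have "\<And>x. x \<notin> G \<Longrightarrow> f' j x = 0" using assms(5,6) by (auto simp: f'_def)
    then show "\<exists>c. f' j = lc c ev G" using lc_ev[OF assms(3)] by blast
  qed (use assms in auto)
  thus False using assms(2,4) k by simp
qed

lemma lc_scale: "lc (\<lambda>k. t * c k) f S = (\<lambda>x. t * lc c f S x)"
  by (simp add: lc_def sum_distrib_left mult.assoc)

lemma cara:
  assumes "finite I" "\<And>k. k \<in> I \<Longrightarrow> x k \<ge> 0"
  shows "\<exists>z. (\<forall>k\<in>I. z k \<ge> 0) \<and> lc z f I = lc x f I \<and> li f {k\<in>I. z k \<noteq> 0}"
  using assms(2)
proof (induction "card {k\<in>I. x k \<noteq> 0}" arbitrary: x rule: less_induct)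
  case less
  define T where "T = {k\<in>I. x k \<noteq> 0}"
  have fT: "finite T" "T \<subseteq> I" using assms(1) by (auto simp: T_def)
  show ?case
  proof (cases "li f T")
    case True thus ?thesis using less.prems unfolding T_def by blast
  next
    case False
    then obtain c0 k1 where c0: "lc c0 f T = 0" "k1 \<in> T" "c0 k1 \<noteq> 0" unfolding li_def by blast
    define c where "c = (if c0 k1 > 0 then c0 else (\<lambda>k. -1 * c0 k))"
    have c: "lc c f T = 0" "k1 \<in> T" "c k1 > 0"
      using c0 lc_scale[of "-1" c0 f T] by (auto simp: c_def fun_eq_iff)
    define P where "P = {k\<in>T. c k > 0}"
    have fP: "finite P" "P \<noteq> {}" using fT c by (auto simp: P_def)
    define t where "t = Min ((\<lambda>k. x k / c k) ` P)"
    have "t \<in> (\<lambda>k. x k / c k) ` P" unfolding t_def using fP by (intro Min_in) auto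
    then obtain k0 where k0: "k0 \<in> P" "t = x k0 / c k0" by blast
    have tle: "t \<le> x k / c k" if "k \<in> P" for k using that fP unfolding t_def by simp
    have xpos: "x k > 0" if "k \<in> T" for k using that less.prems fT by (force simp: T_def)
    have t0: "t \<ge> 0" using k0 xpos[of k0] by (auto simp: P_def)
    define x' where "x' = (\<lambda>k. if k \<in> T then x k - t * c k else x k)"
    have x'nn: "x' k \<ge> 0" if "k \<in> I" for k
    proof (cases "k \<in> T")
      case True
      show ?thesis
      proof (cases "c k > 0")
        case True
        then have "t * c k \<le> x k" using tle[of k] \<open>k \<in> T\<close> by (auto simp: P_def field_simps)
        thus ?thesis using \<open>k \<in> T\<close> by (simp add: x'_def)
      next
        case False
        then have "t * c k \<le> 0" using t0 by (simp add: mult_nonneg_nonpos)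
        thus ?thesis using xpos[of k] \<open>k \<in> T\<close> by (simp add: x'_def)
      qed
    qed (use less.prems that in \<open>auto simp: x'_def\<close>)
    have "x' k0 = 0" using k0 by (auto simp: x'_def P_def)
    have sub: "{k\<in>I. x' k \<noteq> 0} \<subseteq> T - {k0}"
    proof
      fix k assume k: "k \<in> {k\<in>I. x' k \<noteq> 0}"
      then have "k \<noteq> k0" using \<open>x' k0 = 0\<close> by auto
      moreover have "k \<in> T"
      proof (rule ccontr)
        assume "k \<notin> T" then have "x' k = x k" "x k = 0" using k by (auto simp: x'_def T_def)
        thus False using k by simp
      qed
      ultimately show "k \<in> T - {k0}" by simp
    qed
    have "card {k\<in>I. x' k \<noteq> 0} < card {k\<in>I. x k \<noteq> 0}"
    proof -
      have "card {k\<in>I. x' k \<noteq> 0} \<le> card (T - {k0})" using sub fT by (intro card_mono) auto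
      also have "\<dots> < card T" using k0 fT by (intro psubset_card_mono) (auto simp: P_def)
      finally show ?thesis by (simp add: T_def)
    qed
    then obtain z where z: "(\<forall>k\<in>I. z k \<ge> 0)" "lc z f I = lc x' f I" "li f {k\<in>I. z k \<noteq> 0}"
      using less.hyps[of x'] x'nn by blast
    define c' where "c' = (\<lambda>k. if k \<in> T then t * c k else 0)"
    have "lc c' f I = lc c' f T" using fT assms(1) by (intro lc_zero_ext) (auto simp: c'_def)
    also have "\<dots> = lc (\<lambda>k. t * c k) f T" by (intro lc_cong) (auto simp: c'_def)
    also have "\<dots> = 0" using c(1) lc_scale[of t c f T] by (simp add: fun_eq_iff)
    finally have "lc c' f I = 0" .
    moreover have "lc x' f I = lc (\<lambda>k. x k - c' k) f I" by (intro lc_cong) (auto simp: x'_def c'_def)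
    ultimately have "lc x' f I = lc x f I" by (simp add: lc_diff)
    thus ?thesis using z by auto
  qed
qed

lemma lex_less_irrefl: "\<not> lex_less S S"
proof -
  have "(sorted_list_of_set S, sorted_list_of_set S) \<notin> lexord {(a::nat, b). a < b}"
    by (rule lexord_irreflexive) simp
  thus ?thesis unfolding lex_less_def by simp
qed

lemma lex_less_trans: "lex_less S T \<Longrightarrow> lex_less T U \<Longrightarrow> lex_less S U"
proof -
  have tr: "trans {(a::nat, b). a < b}" by (auto simp: trans_def)
  assume a: "lex_less S T" "lex_less T U"
  show ?thesis using a unfolding lex_less_def
    using lexord_trans[OF _ _ tr, of "sorted_list_of_set S" "sorted_list_of_set T" "sorted_list_of_set U"]
    by linarith
qed

lemma finite_minimal_rel:
  assumes "finite X" "X \<noteq> {}" "\<And>x. \<not> R x x" "\<And>x y z. R x y \<Longrightarrow> R y z \<Longrightarrow> R x z"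
  shows "\<exists>x\<in>X. \<forall>y\<in>X. \<not> R y x"
  using assms(1,2)
proof (induction X rule: finite_ne_induct)
  case (singleton x) thus ?case using assms(3) by auto
next
  case (insert x X)
  then obtain m where m: "m \<in> X" "\<forall>y\<in>X. \<not> R y m" by blast
  show ?case
  proof (cases "R x m")
    case True
    then have "\<forall>y\<in>insert x X. \<not> R y x" using m assms(3,4) by blast
    thus ?thesis by blast
  next
    case False thus ?thesis using m by blast
  qed
qed

lemma first_exists:
  assumes "\<exists>l<p. nonneg_vec r (vs l)"
    and tie: "\<And>l l'. l < p \<Longrightarrow> l' < p \<Longrightarrow> nonneg_vec r (vs l) \<Longrightarrow> nonneg_vec r (vs l') \<Longrightarrow>
       supp r (vs l) = supp r (vs l') \<Longrightarrow> \<forall>k<r. vs l k = vs l' k"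
  shows "\<exists>l0. first_ok r p vs l0 \<and> first r p vs = Some (\<lambda>k. if k < r then vs l0 k else 0)"
proof -
  define X where "X = {l. l < p \<and> nonneg_vec r (vs l)}"
  have "finite X" "X \<noteq> {}" using assms(1) by (auto simp: X_def)
  from finite_minimal_rel[OF this, of "\<lambda>l' l. lex_less (supp r (vs l')) (supp r (vs l))"]
  obtain l where l: "l \<in> X" "\<forall>y\<in>X. \<not> lex_less (supp r (vs y)) (supp r (vs l))"
    using lex_less_irrefl lex_less_trans by blast
  have ok: "first_ok r p vs l" unfolding first_ok_def
  proof (intro conjI allI impI)
    show "l < p" "nonneg_vec r (vs l)" using l(1) by (auto simp: X_def)
  next
    fix l' assume "l' < p" "nonneg_vec r (vs l')"
    then have "l' \<in> X" by (simp add: X_def)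
    then show "\<not> lex_less (supp r (vs l')) (supp r (vs l))" using l(2) by blast
  next
    fix l' k assume "l' < p" "nonneg_vec r (vs l')" "supp r (vs l') = supp r (vs l)" "k < r"
    then show "vs l' k = vs l k"
      using tie[of l' l] l(1) by (simp add: X_def)
  qed
  then have "first_ok r p vs (SOME l. first_ok r p vs l)" by (rule someI)
  moreover have "first r p vs = Some (\<lambda>k. if k < r then vs (SOME l. first_ok r p vs l) k else 0)"
    using ok unfolding first_def by auto
  ultimately show ?thesis by blast
qed

lemma sum_elem: "finite U \<Longrightarrow> (\<Sum>a<card U. f (elem U a)) = sum f U"
proof -
  assume fU: "finite U"
  have "sum f U = sum_list (map f (sorted_list_of_set U))"
    using sum.distinct_set_conv_list[of "sorted_list_of_set U" f] fU by simp
  also have "\<dots> = (\<Sum>a = 0..<length (sorted_list_of_set U). map f (sorted_list_of_set U) ! a)"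
    by (simp add: sum_list_sum_nth)
  also have "\<dots> = (\<Sum>a<card U. f (elem U a))"
    using fU by (intro sum.cong) (auto simp: elem_def)
  finally show ?thesis by simp
qed

lemma li_empty: "li f {}" by (simp add: li_def)

lemma column_lemma:
  fixes m n r :: nat and A M :: "nat \<Rightarrow> nat \<Rightarrow> real"
  assumes sol: "\<And>i. i < n \<Longrightarrow> \<exists>y. nonneg_vec r y \<and> (\<forall>j<m. M j i = (\<Sum>k<r. A j k * y k))"
  shows "\<exists>U p Bs. U \<subseteq> {0..<m} \<and> card U \<le> r \<and> 0 < p \<and> p \<le> r choose card U \<and>
     (\<forall>i<n. \<exists>w. first r p (\<lambda>l. colvec r M U (Bs l) i) = Some w \<and> nonneg_vec r w \<and>
        (\<forall>k. r \<le> k \<longrightarrow> w k = 0) \<and> (\<forall>j<m. M j i = (\<Sum>k<r. A j k * w k)))"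
proof -
  define row where "row j = (\<lambda>k. if k < r then A j k else 0)" for j
  obtain U where U: "U \<subseteq> {..<m}" "li row U" "\<forall>j\<in>{..<m}. \<exists>c. row j = lc c row U"
    using li_extend[of "{..<m}" "{}" row] li_empty by auto
  have fU: "finite U" using U(1) finite_subset by blast
  have cardU: "card U \<le> r"
  proof -
    have "card U \<le> card {..<r}"
    proof (rule li_card_bound[OF U(2) fU, of _ ev])
      fix k assume "k \<in> U"
      have "row k = lc (row k) ev {..<r}" by (rule lc_ev) (auto simp: row_def)
      thus "\<exists>c. row k = lc c ev {..<r}" by blast
    qed simp
    thus ?thesis by simp
  qed
  obtain cr where cr: "\<And>j. j < m \<Longrightarrow> row j = lc (cr j) row U"
    using U(3) by (metis lessThan_iff)
  have rel: "(\<Sum>k<r. A j k * x k) = (\<Sum>u\<in>U. cr j u * (\<Sum>k<r. A u k * x k))" if "j < m" for j x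
  proof -
    have "A j k = (\<Sum>u\<in>U. cr j u * A u k)" if "k < r" for k
      using fun_cong[OF cr[OF \<open>j < m\<close>], of k] that by (simp add: row_def lc_def)
    then have "(\<Sum>k<r. A j k * x k) = (\<Sum>k<r. \<Sum>u\<in>U. cr j u * A u k * x k)"
      by (simp add: sum_distrib_right)
    also have "\<dots> = (\<Sum>u\<in>U. cr j u * (\<Sum>k<r. A u k * x k))"
      by (subst sum.swap) (simp add: sum_distrib_left mult.assoc)
    finally show ?thesis .
  qed
  have ext_sol: "\<forall>j<m. M j i = (\<Sum>k<r. A j k * x k)"
    if "i < n" "\<forall>u\<in>U. M u i = (\<Sum>k<r. A u k * x k)" for i x
  proof -
    obtain y where y: "nonneg_vec r y" "\<forall>j<m. M j i = (\<Sum>k<r. A j k * y k)" using sol \<open>i < n\<close> by blast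
    show ?thesis
    proof (intro allI impI)
      fix j assume j: "j < m"
      have "M j i = (\<Sum>u\<in>U. cr j u * M u i)" using y(2) rel[OF j, of y] U(1) j
        by (auto intro!: sum.cong)
      also have "\<dots> = (\<Sum>k<r. A j k * x k)" using rel[OF j, of x] that(2) by simp
      finally show "M j i = (\<Sum>k<r. A j k * x k)" .
    qed
  qed
  define colU where "colU k = (\<lambda>u. if u \<in> U then A u k else 0)" for k
  define G where "G = {S. S \<subseteq> {..<r} \<and> li colU S \<and> (\<forall>k<r. \<exists>c. colU k = lc c colU S)}"
  have colU_sum: "lc x colU {..<r} u = (\<Sum>k<r. A u k * x k)" if "u \<in> U" for x u
    using that by (simp add: lc_def colU_def mult.commute)
  have cardG: "card S = card U" if "S \<in> G" for S
  proof -
    have S: "S \<subseteq> {..<r}" "li colU S" "\<forall>k<r. \<exists>c. colU k = lc c colU S" using that by (auto simp: G_def)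
    have fS: "finite S" using S(1) finite_subset by blast
    have le1: "card S \<le> card U"
    proof (rule li_card_bound[OF S(2) fS fU, of ev])
      fix k assume "k \<in> S"
      have "colU k = lc (colU k) ev U" by (rule lc_ev[OF fU]) (auto simp: colU_def)
      thus "\<exists>c. colU k = lc c ev U" by blast
    qed
    obtain d where d: "\<And>k. k < r \<Longrightarrow> colU k = lc (d k) colU S" using S(3) by metis
    define rS where "rS u = (\<lambda>k. if k \<in> S then A u k else 0)" for u
    have "li rS U" unfolding li_def
    proof (intro allI impI)
      fix c assume c: "lc c rS U = 0"
      have cS: "(\<Sum>u\<in>U. c u * A u l) = 0" if "l \<in> S" for l
        using fun_cong[OF c, of l] that by (simp add: lc_def rS_def)
      have "lc c row U = 0"
      proof
        fix k
        show "lc c row U k = 0 k"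
        proof (cases "k < r")
          case True
          have Auk: "A u k = (\<Sum>l\<in>S. d k l * A u l)" if "u \<in> U" for u
            using fun_cong[OF d[OF True], of u] that by (simp add: lc_def colU_def)
          have "lc c row U k = (\<Sum>u\<in>U. c u * A u k)" using True by (simp add: lc_def row_def)
          also have "\<dots> = (\<Sum>u\<in>U. \<Sum>l\<in>S. d k l * (c u * A u l))"
            by (intro sum.cong) (auto simp: Auk sum_distrib_left mult.left_commute)
          also have "\<dots> = (\<Sum>l\<in>S. d k l * (\<Sum>u\<in>U. c u * A u l))"
            by (subst sum.swap) (simp add: sum_distrib_left)
          also have "\<dots> = 0" using cS by simp
          finally show ?thesis by simp
        qed (simp add: lc_def row_def)
      qed
      then show "\<forall>u\<in>U. c u = 0" using U(2) unfolding li_def by blast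
    qed
    then have le2: "card U \<le> card S"
    proof (rule li_card_bound[OF _ fU fS, of _ ev])
      fix u assume "u \<in> U"
      have "rS u = lc (rS u) ev S" by (rule lc_ev[OF fS]) (auto simp: rS_def)
      thus "\<exists>c. rS u = lc c ev S" by blast
    qed
    show ?thesis using le1 le2 by simp
  qed
  have finG: "finite G" by (rule finite_subset[of G "Pow {..<r}"]) (auto simp: G_def)
  obtain S0 where "S0 \<subseteq> {..<r}" "li colU S0" "\<forall>k\<in>{..<r}. \<exists>c. colU k = lc c colU S0"
    using li_extend[of "{..<r}" "{}" colU] li_empty by auto
  then have "S0 \<in> G" by (auto simp: G_def)
  then have Gne: "G \<noteq> {}" by blast
  have pbound: "card G \<le> r choose card U"
  proof -
    have "G \<subseteq> {S. S \<subseteq> {..<r} \<and> card S = card U}" using cardG by (auto simp: G_def)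
    then have "card G \<le> card {S. S \<subseteq> {..<r} \<and> card S = card U}" by (intro card_mono) auto
    also have "\<dots> = r choose card U" using n_subsets[of "{..<r}" "card U"] by simp
    finally show ?thesis .
  qed
  have evspan: "\<exists>\<beta>. ev u = lc \<beta> colU S" if "S \<in> G" "u \<in> U" for S u
  proof -
    have S: "S \<subseteq> {..<r}" "li colU S" using that by (auto simp: G_def)
    show ?thesis
      by (rule li_spans[OF S(2) finite_subset[OF S(1)] fU]) (use cardG[OF that(1)] that in \<open>auto simp: colU_def ev_def\<close>)
  qed
  define BB where "BB S = (\<lambda>k u. if k \<in> S then (SOME \<beta>. ev u = lc \<beta> colU S) k else 0)" for S
  define cand where "cand S i = (\<lambda>k. \<Sum>u\<in>U. BB S k u * M u i)" for S i
  have cand0: "cand S i k = 0" if "k \<notin> S" for S i k using that by (simp add: cand_def BB_def)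
  have cand_lc: "lc (cand S i) colU S = (\<lambda>u'. if u' \<in> U then M u' i else 0)" if "S \<in> G" for S i
  proof -
    have fS: "finite S" using that finite_subset by (auto simp: G_def)
    have b: "ev u = lc (\<lambda>k. BB S k u) colU S" if "u \<in> U" for u
    proof -
      have "ev u = lc (SOME \<beta>. ev u = lc \<beta> colU S) colU S" using someI_ex[OF evspan[OF \<open>S \<in> G\<close> that]] .
      also have "\<dots> = lc (\<lambda>k. BB S k u) colU S" by (intro lc_cong) (auto simp: BB_def)
      finally show ?thesis .
    qed
    show ?thesis
    proof
      fix u'
      have "lc (cand S i) colU S u' = (\<Sum>k\<in>S. \<Sum>u\<in>U. M u i * (BB S k u * colU k u'))"
        by (simp add: lc_def cand_def sum_distrib_right sum_distrib_left mult_ac)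
      also have "\<dots> = (\<Sum>u\<in>U. M u i * lc (\<lambda>k. BB S k u) colU S u')"
        by (subst sum.swap) (simp add: lc_def sum_distrib_left)
      also have "\<dots> = (\<Sum>u\<in>U. M u i * ev u u')"
        by (intro sum.cong) (auto simp: b)
      also have "\<dots> = (if u' \<in> U then M u' i else 0)"
        using fU by (simp add: ev_def if_distrib sum.delta' cong: if_cong)
      finally show "lc (cand S i) colU S u' = (if u' \<in> U then M u' i else 0)" .
    qed
  qed
  have SG: "S \<subseteq> {..<r}" "finite S" "li colU S" if "S \<in> G" for S
    using that finite_subset by (auto simp: G_def)
  have lc_to_r: "lc x colU {..<r} = lc x colU S" if "S \<subseteq> {..<r}" "\<And>k. k < r \<Longrightarrow> k \<notin> S \<Longrightarrow> x k = 0" for S x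
    using that by (intro lc_zero_ext) auto
  have cand_sol: "\<forall>j<m. M j i = (\<Sum>k<r. A j k * cand S i k)" if "S \<in> G" "i < n" for S i
  proof (rule ext_sol[OF that(2)], intro ballI)
    fix u assume u: "u \<in> U"
    have "(\<Sum>k<r. A u k * cand S i k) = lc (cand S i) colU {..<r} u" using colU_sum[OF u] by simp
    also have "\<dots> = lc (cand S i) colU S u" using lc_to_r[OF SG(1)[OF that(1)], of "cand S i"] cand0 by auto
    also have "\<dots> = M u i" using cand_lc[OF that(1)] u by simp
    finally show "M u i = (\<Sum>k<r. A u k * cand S i k)" by simp
  qed
  have Mcol: "lc y colU {..<r} = (\<lambda>u'. if u' \<in> U then M u' i else 0)"
    if "\<forall>j<m. M j i = (\<Sum>k<r. A j k * y k)" for y i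
  proof
    fix u' show "lc y colU {..<r} u' = (if u' \<in> U then M u' i else 0)"
      using colU_sum[of u' y] that U(1) by (auto simp: lc_def colU_def)
  qed
  obtain g where g: "bij_betw g {0..<card G} G" using ex_bij_betw_nat_finite[OF finG] by blast
  define Bs where "Bs l = (\<lambda>k a. BB (g l) k (elem U a))" for l
  have colvec_eq: "colvec r M U (Bs l) i = cand (g l) i" for l i
    by (simp add: colvec_def cand_def fun_eq_iff Bs_def sum_elem[OF fU, of "\<lambda>u. BB (g l) _ u * M u i"])
  have gG: "g l \<in> G" if "l < card G" for l using g that by (auto simp: bij_betw_def)
  have main: "\<exists>w. first r (card G) (\<lambda>l. colvec r M U (Bs l) i) = Some w \<and> nonneg_vec r w \<and>
        (\<forall>k. r \<le> k \<longrightarrow> w k = 0) \<and> (\<forall>j<m. M j i = (\<Sum>k<r. A j k * w k))" if i: "i < n" for i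
  proof -
    have ex: "\<exists>l<card G. nonneg_vec r (cand (g l) i)"
    proof -
      obtain y where y: "nonneg_vec r y" "\<forall>j<m. M j i = (\<Sum>k<r. A j k * y k)" using sol[OF i] by blast
      obtain z where z: "\<forall>k\<in>{..<r}. z k \<ge> 0" "lc z colU {..<r} = lc y colU {..<r}"
          "li colU {k\<in>{..<r}. z k \<noteq> 0}"
        using cara[of "{..<r}" y colU] y(1) by (auto simp: nonneg_vec_def)
      obtain S where S: "{k\<in>{..<r}. z k \<noteq> 0} \<subseteq> S" "S \<subseteq> {..<r}" "li colU S"
          "\<forall>k\<in>{..<r}. \<exists>c. colU k = lc c colU S"
        using li_extend[OF _ _ z(3), of "{..<r}"] by auto
      have SinG: "S \<in> G" using S by (auto simp: G_def)
      then obtain l where l: "l < card G" "g l = S" using g unfolding bij_betw_def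
        by (metis atLeastLessThan_iff imageE)
      have "lc z colU S = lc z colU {..<r}" by (rule lc_to_r[OF S(2), of z, symmetric]) (use S(1) in blast)
      also have "\<dots> = lc (cand S i) colU S" using z(2) Mcol[OF y(2)] cand_lc[OF SinG] by simp
      finally have eqS: "\<And>k. k \<in> S \<Longrightarrow> z k = cand S i k" using li_unique[OF S(3)] by blast
      have "nonneg_vec r (cand S i)" unfolding nonneg_vec_def
      proof (intro allI impI)
        fix k assume k: "k < r"
        show "cand S i k \<ge> 0"
        proof (cases "k \<in> S")
          case True thus ?thesis using eqS[OF True] z(1) k by (metis lessThan_iff)
        qed (simp add: cand0)
      qed
      thus ?thesis using l by blast
    qed
    have tie: "\<forall>k<r. cand (g l) i k = cand (g l') i k"
      if "l < card G" "l' < card G" "supp r (cand (g l) i) = supp r (cand (g l') i)" for l l'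
    proof -
      define T where "T = supp r (cand (g l) i)"
      have T1: "T \<subseteq> g l" "T \<subseteq> g l'" using that cand0 unfolding T_def supp_def by fastforce+
      have zero: "cand (g l) i k = 0" "cand (g l') i k = 0" if "k < r" "k \<notin> T" for k
        using that \<open>supp r (cand (g l) i) = supp r (cand (g l') i)\<close> unfolding T_def supp_def by auto
      have G1: "g l \<in> G" "g l' \<in> G" using gG that by auto
      have e1: "lc (cand (g l) i) colU T = lc (cand (g l) i) colU (g l)"
        using SG[OF G1(1)] T1 zero by (intro lc_zero_ext[symmetric]) auto
      have e2: "lc (cand (g l') i) colU T = lc (cand (g l') i) colU (g l')"
        using SG[OF G1(2)] T1 zero by (intro lc_zero_ext[symmetric]) auto
      have liT: "li colU T" using li_subset[OF SG(3)[OF G1(1)] T1(1) SG(2)[OF G1(1)]] .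
      have "lc (cand (g l) i) colU T = lc (cand (g l') i) colU T"
        using e1 e2 cand_lc[OF G1(1)] cand_lc[OF G1(2)] by simp
      then have "\<And>k. k \<in> T \<Longrightarrow> cand (g l) i k = cand (g l') i k" using li_unique[OF liT] by blast
      thus ?thesis using zero by (metis)
    qed
    obtain l0 where l0: "first_ok r (card G) (\<lambda>l. cand (g l) i) l0"
      "first r (card G) (\<lambda>l. cand (g l) i) = Some (\<lambda>k. if k < r then cand (g l0) i k else 0)"
      using first_exists[of "card G" r "\<lambda>l. cand (g l) i"] ex tie by blast
    have "l0 < card G" "nonneg_vec r (cand (g l0) i)" using l0(1) unfolding first_ok_def by auto
    moreover have "(\<Sum>k<r. A j k * (if k < r then cand (g l0) i k else 0)) = (\<Sum>k<r. A j k * cand (g l0) i k)" for j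
      by (intro sum.cong) auto
    ultimately show ?thesis using l0(2) cand_sol[OF gG i] unfolding colvec_eq
      by (auto simp: nonneg_vec_def)
  qed
  show ?thesis
    by (rule exI[of _ U], rule exI[of _ "card G"], rule exI[of _ Bs])
      (use U(1) cardU Gne finG pbound main in \<open>auto simp: card_gt_0_iff\<close>)
qed


lemma first_nonneg: "first r p vs = Some w \<Longrightarrow> nonneg_vec r w"
proof -
  assume a: "first r p vs = Some w"
  have ex: "\<exists>l. first_ok r p vs l"
  proof (rule ccontr)
    assume "\<not> (\<exists>l. first_ok r p vs l)"
    then have "first r p vs = None" unfolding first_def by (simp only: if_False)
    thus False using a by simp
  qed
  define l0 where "l0 = (SOME l. first_ok r p vs l)"
  have ok: "first_ok r p vs l0" unfolding l0_def using ex by (rule someI_ex)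
  have w: "w = (\<lambda>k. if k < r then vs l0 k else 0)"
    using a ex unfolding first_def l0_def by (simp only: if_True option.inject)
  have nn: "nonneg_vec r (vs l0)" using ok unfolding first_ok_def by blast
  show ?thesis unfolding nonneg_vec_def w using nn unfolding nonneg_vec_def by simp
qed

lemma factorization_exists: "nonneg_mat m n M \<Longrightarrow> nonneg_factorization m n M n"
  unfolding nonneg_factorization_def
proof (intro exI conjI)
  assume "nonneg_mat m n M"
  then show "nonneg_mat m n M" .
  show "nonneg_mat n n (\<lambda>k j. if k = j then 1 else 0)" by (simp add: nonneg_mat_def)
  show "\<forall>i<m. \<forall>j<n. M i j = (\<Sum>k<n. M i k * (if k = j then 1 else 0))"
    by (simp add: if_distrib[of "\<lambda>x. _ * x"] sum.delta' cong: if_cong)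
qed

theorem mainTheorem8:
  fixes m n r :: nat and M :: "nat \<Rightarrow> nat \<Rightarrow> real"
  assumes "nonneg_mat m n M" and "0 < r"
  shows "nonneg_rank m n M \<le> r \<longleftrightarrow>
    (\<exists>s t U V p q Bs Cs. s \<le> r \<and> t \<le> r \<and>
       U \<subseteq> {0..<m} \<and> card U = s \<and> V \<subseteq> {0..<n} \<and> card V = t \<and>
       0 < p \<and> p \<le> r choose s \<and> 0 < q \<and> q \<le> r choose t \<and>
       test_P m n r M U V p q Bs Cs)"
proof
  assume rk: "nonneg_rank m n M \<le> r"
  define r0 where "r0 = nonneg_rank m n M"
  have "nonneg_factorization m n M r0"
    unfolding r0_def nonneg_rank_def by (rule LeastI[of "nonneg_factorization m n M", OF factorization_exists[OF assms(1)]])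
  then obtain A0 W0 where f0: "nonneg_mat m r0 A0" "nonneg_mat r0 n W0"
    "\<forall>i<m. \<forall>j<n. M i j = (\<Sum>k<r0. A0 i k * W0 k j)"
    unfolding nonneg_factorization_def by blast
  define A where "A i k = (if k < r0 then A0 i k else 0)" for i k
  define W where "W k j = (if k < r0 then W0 k j else 0)" for k j
  have r0r: "r0 \<le> r" using rk r0_def by simp
  have fac: "M i j = (\<Sum>k<r. A i k * W k j)" if "i < m" "j < n" for i j
  proof -
    have "(\<Sum>k<r. A i k * W k j) = (\<Sum>k<r. if k \<in> {..<r0} then A0 i k * W0 k j else 0)"
      by (intro sum.cong) (auto simp: A_def W_def)
    also have "\<dots> = (\<Sum>k\<in>{..<r} \<inter> {..<r0}. A0 i k * W0 k j)" by (rule sum.inter_restrict[symmetric]) simp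
    also have "{..<r} \<inter> {..<r0} = {..<r0}" using r0r by auto
    finally show ?thesis using f0(3) that by simp
  qed
  have Anonneg: "A j k \<ge> 0" if "j < m" for j k using f0(1) that by (auto simp: A_def nonneg_mat_def)
  have Wnonneg: "W k i \<ge> 0" if "i < n" for k i using f0(2) that by (auto simp: W_def nonneg_mat_def)
  have sol1: "\<exists>y. nonneg_vec r y \<and> (\<forall>j<m. M j i = (\<Sum>k<r. A j k * y k))" if "i < n" for i
    using that fac Wnonneg by (intro exI[of _ "\<lambda>k. W k i"]) (auto simp: nonneg_vec_def)
  from column_lemma[of n r m M A, OF sol1] obtain U p Bs where c1: "U \<subseteq> {0..<m}" "card U \<le> r" "0 < p" "p \<le> r choose card U"
    "\<forall>i<n. \<exists>w. first r p (\<lambda>l. colvec r M U (Bs l) i) = Some w \<and> nonneg_vec r w \<and>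
        (\<forall>k. r \<le> k \<longrightarrow> w k = 0) \<and> (\<forall>j<m. M j i = (\<Sum>k<r. A j k * w k))"
    by blast
  have "\<forall>i\<in>{..<n}. \<exists>w. first r p (\<lambda>l. colvec r M U (Bs l) i) = Some w \<and> nonneg_vec r w \<and>
        (\<forall>j<m. M j i = (\<Sum>k<r. A j k * w k))" using c1(5) by blast
  from bchoice[OF this] obtain wf where wf0: "\<forall>i\<in>{..<n}. first r p (\<lambda>l. colvec r M U (Bs l) i) = Some (wf i) \<and> nonneg_vec r (wf i) \<and>
        (\<forall>j<m. M j i = (\<Sum>k<r. A j k * wf i k))" by blast
  have wf: "first r p (\<lambda>l. colvec r M U (Bs l) i) = Some (wf i) \<and> nonneg_vec r (wf i) \<and>
        (\<forall>j<m. M j i = (\<Sum>k<r. A j k * wf i k))" if "i < n" for i using wf0 that by blast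
  define Mt where "Mt i j = M j i" for i j
  have sol2: "\<exists>y. nonneg_vec r y \<and> (\<forall>i<n. Mt i j = (\<Sum>k<r. wf i k * y k))" if "j < m" for j
    using that wf Anonneg by (intro exI[of _ "A j"]) (auto simp: nonneg_vec_def Mt_def mult.commute)
  from column_lemma[of m r n Mt wf, OF sol2] obtain V q Cs' where c2: "V \<subseteq> {0..<n}" "card V \<le> r" "0 < q" "q \<le> r choose card V"
    "\<forall>j<m. \<exists>a. first r q (\<lambda>l. colvec r Mt V (Cs' l) j) = Some a \<and> nonneg_vec r a \<and>
        (\<forall>k. r \<le> k \<longrightarrow> a k = 0) \<and> (\<forall>i<n. Mt i j = (\<Sum>k<r. wf i k * a k))"
    by blast
  have "\<forall>j\<in>{..<m}. \<exists>a. first r q (\<lambda>l. colvec r Mt V (Cs' l) j) = Some a \<and>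
        (\<forall>i<n. Mt i j = (\<Sum>k<r. wf i k * a k))" using c2(5) by blast
  from bchoice[OF this] obtain af where af0: "\<forall>j\<in>{..<m}. first r q (\<lambda>l. colvec r Mt V (Cs' l) j) = Some (af j) \<and>
        (\<forall>i<n. Mt i j = (\<Sum>k<r. wf i k * af j k))" by blast
  have af: "first r q (\<lambda>l. colvec r Mt V (Cs' l) j) = Some (af j) \<and>
        (\<forall>i<n. Mt i j = (\<Sum>k<r. wf i k * af j k))" if "j < m" for j using af0 that by blast
  define Cs where "Cs l = (\<lambda>b k. Cs' l k b)" for l
  have rv: "rowvec r M V (Cs l) j = colvec r Mt V (Cs' l) j" for l j
    by (simp add: rowvec_def colvec_def Cs_def Mt_def mult.commute)
  have TP: "test_P m n r M U V p q Bs Cs"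
    unfolding test_P_def Let_def rv
  proof (intro conjI allI impI)
    fix i assume "i < n" thus "first r p (\<lambda>l. colvec r M U (Bs l) i) \<noteq> None" using wf by auto
  next
    fix j assume "j < m" thus "first r q (\<lambda>l. colvec r Mt V (Cs' l) j) \<noteq> None" using af by auto
  next
    fix i j assume ij: "i < n" "j < m"
    have "(\<Sum>k<r. af j k * wf i k) = M j i" using af[OF ij(2)] ij(1) by (simp add: Mt_def mult.commute)
    thus "(\<Sum>k<r. the (first r q (\<lambda>l. colvec r Mt V (Cs' l) j)) k *
            the (first r p (\<lambda>l. colvec r M U (Bs l) i)) k) = M j i"
      using af[OF ij(2)] wf[OF ij(1)] by simp
  qed
  show "\<exists>s t U V p q Bs Cs. s \<le> r \<and> t \<le> r \<and>
       U \<subseteq> {0..<m} \<and> card U = s \<and> V \<subseteq> {0..<n} \<and> card V = t \<and>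
       0 < p \<and> p \<le> r choose s \<and> 0 < q \<and> q \<le> r choose t \<and>
       test_P m n r M U V p q Bs Cs"
    apply (rule exI[of _ "card U"], rule exI[of _ "card V"], rule exI[of _ U], rule exI[of _ V],
      rule exI[of _ p], rule exI[of _ q], rule exI[of _ Bs], rule exI[of _ Cs])
    using TP c1(1-4) c2(1-4) by simp
next
  assume "\<exists>s t U V p q Bs Cs. s \<le> r \<and> t \<le> r \<and>
       U \<subseteq> {0..<m} \<and> card U = s \<and> V \<subseteq> {0..<n} \<and> card V = t \<and>
       0 < p \<and> p \<le> r choose s \<and> 0 < q \<and> q \<le> r choose t \<and>
       test_P m n r M U V p q Bs Cs"
  then obtain U V p q Bs Cs where T: "test_P m n r M U V p q Bs Cs" by blast
  define Wo where "Wo i = first r p (\<lambda>l. colvec r M U (Bs l) i)" for i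
  define Ao where "Ao j = first r q (\<lambda>l. rowvec r M V (Cs l) j)" for j
  have T': "\<forall>i<n. Wo i \<noteq> None" "\<forall>j<m. Ao j \<noteq> None"
     "\<forall>i<n. \<forall>j<m. (\<Sum>k<r. the (Ao j) k * the (Wo i) k) = M j i"
    using T unfolding test_P_def Let_def Wo_def Ao_def by auto
  have "nonneg_factorization m n M r"
    unfolding nonneg_factorization_def
  proof (intro exI conjI)
    show "nonneg_mat m r (\<lambda>j k. the (Ao j) k)" unfolding nonneg_mat_def
    proof (intro allI impI)
      fix j k assume "j < m" "k < r"
      then obtain a where "Ao j = Some a" using T'(2) by blast
      then show "the (Ao j) k \<ge> 0" using first_nonneg[of r q] \<open>k < r\<close> unfolding Ao_def nonneg_vec_def by auto
    qed
    show "nonneg_mat r n (\<lambda>k i. the (Wo i) k)" unfolding nonneg_mat_def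
    proof (intro allI impI)
      fix k i assume "k < r" "i < n"
      then obtain a where "Wo i = Some a" using T'(1) by blast
      then show "the (Wo i) k \<ge> 0" using first_nonneg[of r p] \<open>k < r\<close> unfolding Wo_def nonneg_vec_def by auto
    qed
    show "\<forall>i<m. \<forall>j<n. M i j = (\<Sum>k<r. the (Ao i) k * the (Wo j) k)" using T'(3) by simp
  qed
  then show "nonneg_rank m n M \<le> r" unfolding nonneg_rank_def by (rule Least_le)
qed

end
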